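(* Let $c$ be a step speed function, $q\in\mathbb R$ and $(x,y)\in\mathcal W$. There exists $C=C(x,y,c(\cdot-q))<\infty$ such that for all $0<\delta\le1$, $$\Gamma^q(x,y+\delta)-\Gamma^q(x,y)<C\sqrt\delta.$$
   Context: A step speed function is $c(x)=\sum_{m=1}^{L-1}r_m\mathbf 1_{(a_m,a_{m+1})}(x)+\sum_{m=2}^{L-1}\min\{r_{m-1},r_m\}\mathbf 1_{\{a_m\}}(x)$ with $-\infty=a_1<\dots<a_L=+\infty$ and $r_m>0$. $\mathcal W=\{(x,y):y\ge0,x\ge-y\}$; $\gamma(x,y)=(\sqrt{x+y}+\sqrt y)^2$. $\mathcal H(x,y)$: continuous piecewise $C^1$ paths $\mathbf x=(x_1,x_2):[0,1]\to\mathcal W$ with $\mathbf x(0)=(0,0)$, $\mathbf x(1)=(x,y)$, $\mathbf x'(s)\in\mathcal W$ wherever defined. $\Gamma^q(x,y)=\sup_{\mathbf x\in\mathcal H(x,y)}\int_0^1\frac{\gamma(\mathbf x'(s))}{c(x_1(s)-q)}ds$. *)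

theory Defs
  imports "HOL-Analysis.Analysis"
begin

text \<open>Step speed function with finite breakpoints b 1 < ... < b k (k >= 0) and
 rates r 0, ..., r k > 0: c = r i on (b i, b (i+1)) (with b 0 = -infinity,
 b (k+1) = +infinity) and c (b i) = min (r (i-1)) (r i).\<close>
definition step_speed :: "(real \<Rightarrow> real) \<Rightarrow> bool" where
  "step_speed c \<longleftrightarrow> (\<exists>(k::nat) (b::nat \<Rightarrow> real) (r::nat \<Rightarrow> real).
     (\<forall>i j. 1 \<le> i \<longrightarrow> i < j \<longrightarrow> j \<le> k \<longrightarrow> b i < b j) \<and>
     (\<forall>i\<le>k. r i > 0) \<and>
     (\<forall>i\<le>k. \<forall>x. (i = 0 \<or> b i < x) \<and> (i = k \<or> x < b (i+1)) \<longrightarrow> c x = r i) \<and>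
     (\<forall>i. 1 \<le> i \<longrightarrow> i \<le> k \<longrightarrow> c (b i) = min (r (i-1)) (r i)))"

definition WW :: "(real \<times> real) set" where
  "WW = {(x, y). y \<ge> 0 \<and> x \<ge> - y}"

definition gam :: "real \<times> real \<Rightarrow> real" where
  "gam p = (sqrt (fst p + snd p) + sqrt (snd p))\<^sup>2"

definition paths_H :: "real \<times> real \<Rightarrow> (real \<Rightarrow> real \<times> real) set" where
  "paths_H p = {g. g piecewise_C1_differentiable_on {0..1} \<and>
       (\<forall>s\<in>{0..1}. g s \<in> WW) \<and> g 0 = (0, 0) \<and> g 1 = p \<and>
       (\<forall>s\<in>{0<..<1}. g differentiable (at s) \<longrightarrow> vector_derivative g (at s) \<in> WW)}"

definition Gamma_q :: "(real \<Rightarrow> real) \<Rightarrow> real \<Rightarrow> real \<times> real \<Rightarrow> real" where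
  "Gamma_q c q p = (SUP g\<in>paths_H p.
      integral {0..1} (\<lambda>s. gam (vector_derivative g (at s)) / c (fst (g s) - q)))"

end

theory Submission
  imports Defs
begin


lemma step_cover:
  assumes mono: "\<forall>i j. 1 \<le> i \<longrightarrow> i < j \<longrightarrow> j \<le> k \<longrightarrow> (b::nat\<Rightarrow>real) i < b j"
  shows "(\<exists>j. 1 \<le> j \<and> j \<le> k \<and> t = b j) \<or>
         (\<exists>i\<le>k. (i = 0 \<or> b i < t) \<and> (i = k \<or> t < b (i+1)))"
proof (cases "\<exists>j. 1 \<le> j \<and> j \<le> k \<and> t = b j")
  case True then show ?thesis by blast
next
  case False
  define S where "S = insert 0 {j. 1 \<le> j \<and> j \<le> k \<and> b j < t}"
  have finS: "finite S" unfolding S_def by (rule finite_insert[THEN iffD2]) (rule finite_subset[of _ "{..k}"], auto)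
  define i where "i = Max S"
  have iS: "i \<in> S" unfolding i_def using finS S_def by (intro Max_in) auto
  have imax: "\<And>j. j \<in> S \<Longrightarrow> j \<le> i" unfolding i_def using finS by auto
  have ik: "i \<le> k" using iS unfolding S_def by auto
  have A: "i = 0 \<or> b i < t" using iS unfolding S_def by auto
  have B: "i = k \<or> t < b (i+1)"
  proof (rule ccontr)
    assume "\<not> (i = k \<or> t < b (i+1))"
    then have "i < k" "b (i+1) \<le> t" using ik by auto
    moreover have "t \<noteq> b (i+1)" using False \<open>i < k\<close> by auto
    ultimately have "i+1 \<in> S" unfolding S_def by auto
    then show False using imax by fastforce
  qed
  show ?thesis using A B ik by blast
qed

lemma step_speed_props:
  assumes "step_speed c"
  shows "\<exists>m>0. (\<forall>t. m \<le> c t) \<and> (\<forall>t. \<exists>e>0. \<forall>s. \<bar>s - t\<bar> < e \<longrightarrow> c t \<le> c s)"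
proof -
  obtain k b r where mono: "\<forall>i j. 1 \<le> i \<longrightarrow> i < j \<longrightarrow> j \<le> k \<longrightarrow> (b::nat\<Rightarrow>real) i < b j"
    and rpos: "\<forall>i\<le>k. (r::nat\<Rightarrow>real) i > 0"
    and reg: "\<forall>i\<le>k. \<forall>x. (i = 0 \<or> b i < x) \<and> (i = k \<or> x < b (i+1)) \<longrightarrow> c x = r i"
    and brk: "\<forall>i. 1 \<le> i \<longrightarrow> i \<le> k \<longrightarrow> c (b i) = min (r (i-1)) (r i)"
    using assms unfolding step_speed_def by blast
  define m where "m = Min (r ` {..k})"
  have mpos: "m > 0" unfolding m_def using rpos by (subst Min_gr_iff) auto
  have mle: "\<And>i. i \<le> k \<Longrightarrow> m \<le> r i" unfolding m_def by auto
  have lb: "m \<le> c t" for t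
    using step_cover[OF mono, of t]
  proof
    assume "\<exists>j. 1 \<le> j \<and> j \<le> k \<and> t = b j"
    then obtain j where "1 \<le> j" "j \<le> k" "t = b j" by blast
    then show ?thesis using brk mle[of j] mle[of "j-1"] by auto
  next
    assume "\<exists>i\<le>k. (i = 0 \<or> b i < t) \<and> (i = k \<or> t < b (i+1))"
    then obtain i where "i \<le> k" "(i = 0 \<or> b i < t) \<and> (i = k \<or> t < b (i+1))" by blast
    then show ?thesis using reg mle by metis
  qed
  have loc: "\<exists>e>0. \<forall>s. \<bar>s - t\<bar> < e \<longrightarrow> c t \<le> c s" for t
    using step_cover[OF mono, of t]
  proof
    assume "\<exists>j. 1 \<le> j \<and> j \<le> k \<and> t = b j"
    then obtain j where j: "1 \<le> j" "j \<le> k" "t = b j" by blast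
    define e where "e = min (if j = 1 then 1 else b j - b (j-1)) (if j = k then 1 else b (j+1) - b j)"
    have e1: "j \<noteq> 1 \<Longrightarrow> b (j-1) < b j" using mono j by auto
    have e2: "j \<noteq> k \<Longrightarrow> b j < b (j+1)" using mono j by auto
    have "e > 0" unfolding e_def using e1 e2 by auto
    moreover have "c t \<le> c s" if "\<bar>s - t\<bar> < e" for s
    proof -
      consider "s < t" | "s = t" | "s > t" by linarith
      then show ?thesis
      proof cases
        case 1
        have "(j-1 = 0 \<or> b (j-1) < s) \<and> (j-1 = k \<or> s < b (j-1+1))"
          using 1 that j unfolding e_def by (auto split: if_splits)
        then have "c s = r (j-1)" using reg j by auto
        then show ?thesis using brk j by auto
      next
        case 2 then show ?thesis by simp
      next
        case 3
        have "(j = 0 \<or> b j < s) \<and> (j = k \<or> s < b (j+1))"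
          using 3 that j unfolding e_def by (auto split: if_splits)
        then have "c s = r j" using reg j by auto
        then show ?thesis using brk j by auto
      qed
    qed
    ultimately show ?thesis by blast
  next
    assume "\<exists>i\<le>k. (i = 0 \<or> b i < t) \<and> (i = k \<or> t < b (i+1))"
    then obtain i where i: "i \<le> k" "(i = 0 \<or> b i < t) \<and> (i = k \<or> t < b (i+1))" by blast
    define e where "e = min (if i = 0 then 1 else t - b i) (if i = k then 1 else b (i+1) - t)"
    have "e > 0" unfolding e_def using i by auto
    moreover have "c t \<le> c s" if "\<bar>s - t\<bar> < e" for s
    proof -
      have "(i = 0 \<or> b i < s) \<and> (i = k \<or> s < b (i+1))"
        using that i unfolding e_def by (auto split: if_splits)
      then have "c s = r i" using reg i by auto
      moreover have "c t = r i" using reg i by auto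
      ultimately show ?thesis by simp
    qed
    ultimately show ?thesis by blast
  qed
  show ?thesis using mpos lb loc by blast
qed



lemma kappa_approx:
  fixes \<kappa> :: "real \<Rightarrow> real"
  assumes nn: "\<forall>t. 0 \<le> \<kappa> t" and bd: "\<forall>t. \<kappa> t \<le> M"
    and loc: "\<forall>t. \<exists>e>0. \<forall>s. \<bar>s - t\<bar> < e \<longrightarrow> \<kappa> s \<le> \<kappa> t"
  shows "\<exists>K. (\<forall>n. continuous_on UNIV (K n)) \<and> (\<forall>n t. 0 \<le> K n t \<and> K n t \<le> M) \<and>
             (\<forall>t. (\<lambda>n. K n t) \<longlonglongrightarrow> \<kappa> t)"
proof -
  define K where "K n t = Sup (range (\<lambda>s. \<kappa> s - real n * \<bar>s - t\<bar>))" for n :: nat and t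
  have bdd: "bdd_above (range (\<lambda>s. \<kappa> s - real n * \<bar>s - t\<bar>))" for n t
  proof (rule bdd_aboveI[where M=M])
    fix z assume "z \<in> range (\<lambda>s. \<kappa> s - real n * \<bar>s - t\<bar>)"
    then obtain s where "z = \<kappa> s - real n * \<bar>s - t\<bar>" by auto
    moreover have "real n * \<bar>s - t\<bar> \<ge> 0" by simp
    ultimately show "z \<le> M" using bd[rule_format, of s] by linarith
  qed
  have up: "\<kappa> s - real n * \<bar>s - t\<bar> \<le> K n t" for n s t
    unfolding K_def by (rule cSup_upper[OF _ bdd]) auto
  have lo: "\<kappa> t \<le> K n t" for n t using up[of t n t] by simp
  have hi: "K n t \<le> M" for n t
    unfolding K_def
  proof (rule cSup_least)
    show "range (\<lambda>s. \<kappa> s - real n * \<bar>s - t\<bar>) \<noteq> {}" by simp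
    fix z assume "z \<in> range (\<lambda>s. \<kappa> s - real n * \<bar>s - t\<bar>)"
    then obtain s where "z = \<kappa> s - real n * \<bar>s - t\<bar>" by auto
    moreover have "real n * \<bar>s - t\<bar> \<ge> 0" by simp
    ultimately show "z \<le> M" using bd[rule_format, of s] by linarith
  qed
  have lip1: "K n t \<le> K n t' + real n * \<bar>t - t'\<bar>" for n t t'
  proof -
    have "K n t \<le> K n t' + real n * \<bar>t - t'\<bar>"
      unfolding K_def[of n t]
    proof (rule cSup_least)
      show "range (\<lambda>s. \<kappa> s - real n * \<bar>s - t\<bar>) \<noteq> {}" by simp
      fix z assume "z \<in> range (\<lambda>s. \<kappa> s - real n * \<bar>s - t\<bar>)"
      then obtain s where z: "z = \<kappa> s - real n * \<bar>s - t\<bar>" by auto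
      have "\<bar>s - t'\<bar> \<le> \<bar>s - t\<bar> + \<bar>t - t'\<bar>" by simp
      then have "real n * \<bar>s - t'\<bar> \<le> real n * \<bar>s - t\<bar> + real n * \<bar>t - t'\<bar>"
        by (metis distrib_left mult_left_mono of_nat_0_le_iff)
      then show "z \<le> K n t' + real n * \<bar>t - t'\<bar>" using z up[of s n t'] by linarith
    qed
    then show ?thesis .
  qed
  have cont: "continuous_on UNIV (K n)" for n
  proof (rule lipschitz_on_continuous_on)
    show "lipschitz_on (real n) UNIV (K n)"
      unfolding lipschitz_on_def
    proof (intro conjI ballI)
      fix t t' :: real
      have "K n t \<le> K n t' + real n * \<bar>t - t'\<bar>" "K n t' \<le> K n t + real n * \<bar>t' - t\<bar>" using lip1 by auto
      then show "dist (K n t) (K n t') \<le> real n * dist t t'"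
        by (simp add: dist_real_def abs_minus_commute abs_le_iff)
    qed simp
  qed
  have conv: "(\<lambda>n. K n t) \<longlonglongrightarrow> \<kappa> t" for t
  proof -
    obtain e where e: "e > 0" "\<forall>s. \<bar>s - t\<bar> < e \<longrightarrow> \<kappa> s \<le> \<kappa> t" using loc by blast
    have "eventually (\<lambda>n. K n t = \<kappa> t) sequentially"
    proof (rule eventually_sequentiallyI[of "nat \<lceil>M / e\<rceil>"])
      fix n assume n: "nat \<lceil>M / e\<rceil> \<le> n"
      have Mn: "M \<le> real n * e"
      proof -
        have "M / e \<le> real n" using n by linarith
        then show ?thesis using e by (simp add: field_simps)
      qed
      have "K n t \<le> \<kappa> t"
        unfolding K_def
      proof (rule cSup_least)
        show "range (\<lambda>s. \<kappa> s - real n * \<bar>s - t\<bar>) \<noteq> {}" by simp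
        fix z assume "z \<in> range (\<lambda>s. \<kappa> s - real n * \<bar>s - t\<bar>)"
        then obtain s where z: "z = \<kappa> s - real n * \<bar>s - t\<bar>" by auto
        show "z \<le> \<kappa> t"
        proof (cases "\<bar>s - t\<bar> < e")
          case True then show ?thesis using z e by (smt (verit) mult_nonneg_nonneg of_nat_0_le_iff abs_ge_zero)
        next
          case False
          then have "real n * e \<le> real n * \<bar>s - t\<bar>" by (simp add: mult_left_mono)
          then show ?thesis using z Mn bd[rule_format, of s] nn[rule_format, of t] by linarith
        qed
      qed
      then show "K n t = \<kappa> t" using lo[of t n] by simp
    qed
    then show ?thesis by (rule tendsto_eventually)
  qed
  show ?thesis
    apply (rule exI[of _ K])
    using cont lo hi nn conv by (meson order_trans)
qed



lemma chain_rule: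
  fixes \<kappa> f f' d :: "real \<Rightarrow> real"
  assumes nn: "\<forall>t. 0 \<le> \<kappa> t" and bd: "\<forall>t. \<kappa> t \<le> M"
    and loc: "\<forall>t. \<exists>e>0. \<forall>s. \<bar>s - t\<bar> < e \<longrightarrow> \<kappa> s \<le> \<kappa> t"
    and T: "finite T" and ab: "\<alpha> \<le> \<beta>" and fc: "continuous_on {\<alpha>..\<beta>} f"
    and fd: "\<And>s. s \<in> {\<alpha><..<\<beta>} - T \<Longrightarrow> (f has_real_derivative f' s) (at s)"
    and di: "d integrable_on {\<alpha>..\<beta>}" and dle: "\<And>s. s \<in> {\<alpha>..\<beta>} \<Longrightarrow> \<bar>f' s\<bar> \<le> d s"
    and fL: "\<And>s. s \<in> {\<alpha>..\<beta>} \<Longrightarrow> L < f s"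
  shows "((\<lambda>s. f' s * \<kappa> (f s)) has_integral (integral {L..f \<beta>} \<kappa> - integral {L..f \<alpha>} \<kappa>)) {\<alpha>..\<beta>}"
proof -
  obtain K where Kc: "\<And>n. continuous_on UNIV (K n)" and Kb: "\<And>n t. 0 \<le> K n t \<and> K n t \<le> M"
    and Kl: "\<And>t. (\<lambda>n. K n t) \<longlonglongrightarrow> \<kappa> t"
    using kappa_approx[OF nn bd loc] by blast
  have M0: "0 \<le> M" using nn bd by (meson order_trans)
  define G where "G n z = integral {L..z} (K n)" for n z
  have Gd: "((G n) has_real_derivative K n z) (at z)" if "L < z" for n z
  proof -
    have "((G n) has_real_derivative K n z) (at z within {L..z+1})"
      unfolding G_def
      by (rule integral_has_real_derivative) (use continuous_on_subset[OF Kc[of n]] that in auto)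
    moreover have "at z within {L..z+1} = at z"
      by (rule at_within_interior) (use that in auto)
    ultimately show ?thesis by simp
  qed
  have Gc: "continuous_on {L<..} (G n)" for n
    by (rule continuous_at_imp_continuous_on) (use Gd DERIV_isCont in blast)
  have ftc: "((\<lambda>s. K n (f s) * f' s) has_integral (G n (f \<beta>) - G n (f \<alpha>))) {\<alpha>..\<beta>}" for n
  proof (rule fundamental_theorem_of_calculus_interior_strong[OF T ab])
    fix s assume s: "s \<in> {\<alpha><..<\<beta>} - T"
    have "((\<lambda>s. G n (f s)) has_real_derivative K n (f s) * f' s) (at s)"
      by (rule DERIV_chain2[OF Gd fd[OF s]]) (use s fL in auto)
    then show "((\<lambda>s. G n (f s)) has_vector_derivative K n (f s) * f' s) (at s)"
      by (simp add: has_real_derivative_iff_has_vector_derivative)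
  next
    show "continuous_on {\<alpha>..\<beta>} (\<lambda>s. G n (f s))"
      by (rule continuous_on_compose2[OF Gc fc]) (use fL in auto)
  qed
  define F where "F n s = f' s * K n (f s)" for n s
  have Fi: "F n integrable_on {\<alpha>..\<beta>}" for n
    using ftc[of n] unfolding F_def by (simp add: mult.commute has_integral_integrable)
  have Fint: "integral {\<alpha>..\<beta>} (F n) = G n (f \<beta>) - G n (f \<alpha>)" for n
    using ftc[of n] unfolding F_def by (simp add: mult.commute integral_unique)
  have hi: "(\<lambda>s. M * d s) integrable_on {\<alpha>..\<beta>}" using integrable_on_cmult_left[OF di, of M] by simp
  have Fle: "norm (F n s) \<le> M * d s" if "s \<in> {\<alpha>..\<beta>}" for n s
  proof -
    have "\<bar>f' s\<bar> * K n (f s) \<le> d s * M"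
      by (rule mult_mono) (use dle[OF that] Kb in auto)
    then show ?thesis unfolding F_def using Kb[of n "f s"] by (simp add: abs_mult mult.commute)
  qed
  have Fconv: "(\<lambda>n. F n s) \<longlonglongrightarrow> f' s * \<kappa> (f s)" for s
    unfolding F_def by (intro tendsto_mult_left Kl)
  note DC = dominated_convergence[OF Fi hi Fle Fconv]
  have Gconv: "(\<lambda>n. G n z) \<longlonglongrightarrow> integral {L..z} \<kappa>" for z
  proof -
    have "(\<lambda>n. integral {L..z} (K n)) \<longlonglongrightarrow> integral {L..z} \<kappa>"
    proof (rule dominated_convergence(2))
      show "K n integrable_on {L..z}" for n
        using Kc continuous_on_subset integrable_continuous_interval by blast
      show "(\<lambda>s. M) integrable_on {L..z}" by (rule integrable_const_ivl)
      show "norm (K n s) \<le> M" for n s using Kb[of n s] by simp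
      show "(\<lambda>n. K n s) \<longlonglongrightarrow> \<kappa> s" for s by (rule Kl)
    qed
    then show ?thesis unfolding G_def .
  qed
  have "(\<lambda>n. G n (f \<beta>) - G n (f \<alpha>)) \<longlonglongrightarrow> integral {L..f \<beta>} \<kappa> - integral {L..f \<alpha>} \<kappa>"
    by (intro tendsto_diff Gconv)
  moreover have "(\<lambda>n. G n (f \<beta>) - G n (f \<alpha>)) \<longlonglongrightarrow> integral {\<alpha>..\<beta>} (\<lambda>s. f' s * \<kappa> (f s))"
    using DC(2) unfolding Fint .
  ultimately have "integral {\<alpha>..\<beta>} (\<lambda>s. f' s * \<kappa> (f s)) = integral {L..f \<beta>} \<kappa> - integral {L..f \<alpha>} \<kappa>"
    using LIMSEQ_unique by blast
  then show ?thesis using DC(1) by (metis has_integral_integrable_integral)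
qed

lemma kappa_comp_integrable:
  fixes \<kappa> \<phi> :: "real \<Rightarrow> real"
  assumes nn: "\<forall>t. 0 \<le> \<kappa> t" and bd: "\<forall>t. \<kappa> t \<le> M"
    and loc: "\<forall>t. \<exists>e>0. \<forall>s. \<bar>s - t\<bar> < e \<longrightarrow> \<kappa> s \<le> \<kappa> t"
    and pc: "continuous_on {a..b} \<phi>"
  shows "(\<lambda>s. \<kappa> (\<phi> s)) integrable_on {a..b}"
proof -
  obtain K where Kc: "\<And>n. continuous_on UNIV (K n)" and Kb: "\<And>n t. 0 \<le> K n t \<and> K n t \<le> M"
    and Kl: "\<And>t. (\<lambda>n. K n t) \<longlonglongrightarrow> \<kappa> t"
    using kappa_approx[OF nn bd loc] by blast
  show ?thesis
  proof (rule dominated_convergence(1))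
    show "(\<lambda>s. K n (\<phi> s)) integrable_on {a..b}" for n
      by (rule integrable_continuous_interval, rule continuous_on_compose2[OF Kc[of n] pc]) auto
    show "(\<lambda>s. M) integrable_on {a..b}" by (rule integrable_const_ivl)
    show "norm (K n (\<phi> s)) \<le> M" for n s using Kb[of n "\<phi> s"] by simp
    show "(\<lambda>n. K n (\<phi> s)) \<longlonglongrightarrow> \<kappa> (\<phi> s)" for s by (rule Kl)
  qed
qed



lemma hvd_fst: "(g has_vector_derivative D) F \<Longrightarrow> ((\<lambda>s. fst (g s)) has_vector_derivative fst D) F"
  unfolding has_vector_derivative_def by (drule has_derivative_fst) simp

lemma hvd_snd: "(g has_vector_derivative D) F \<Longrightarrow> ((\<lambda>s. snd (g s)) has_vector_derivative snd D) F"
  unfolding has_vector_derivative_def by (drule has_derivative_snd) simp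

lemma path_data:
  assumes "g \<in> paths_H p"
  obtains T D where "finite T" "0 \<in> T" "1 \<in> T"
    "\<And>s. s \<in> {0..1} - T \<Longrightarrow> (g has_vector_derivative D s) (at s)"
    "\<And>s. s \<in> {0..1} - T \<Longrightarrow> vector_derivative g (at s) = D s"
    "\<And>s. s \<in> {0..1} - T \<Longrightarrow> D s \<in> WW"
    "continuous_on {0..1} g" "\<And>s. s \<in> {0..1} \<Longrightarrow> g s \<in> WW" "g 0 = (0,0)" "g 1 = p"
proof -
  have pc: "g piecewise_C1_differentiable_on {0..1}" and W: "\<forall>s\<in>{0..1}. g s \<in> WW"
    and g0: "g 0 = (0,0)" and g1: "g 1 = p"
    and dW: "\<forall>s\<in>{0<..<1}. g differentiable (at s) \<longrightarrow> vector_derivative g (at s) \<in> WW"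
    using assms unfolding paths_H_def by auto
  obtain S where S: "finite S" "g C1_differentiable_on {0..1} - S" and gc: "continuous_on {0..1} g"
    using pc unfolding piecewise_C1_differentiable_on_def by blast
  obtain D where D: "\<And>s. s \<in> {0..1} - S \<Longrightarrow> (g has_vector_derivative D s) (at s)"
    using S(2) unfolding C1_differentiable_on_def by blast
  define T where "T = insert 0 (insert 1 S)"
  have T: "finite T" "0 \<in> T" "1 \<in> T" using S unfolding T_def by auto
  have D': "\<And>s. s \<in> {0..1} - T \<Longrightarrow> (g has_vector_derivative D s) (at s)" using D unfolding T_def by auto
  have vd: "\<And>s. s \<in> {0..1} - T \<Longrightarrow> vector_derivative g (at s) = D s" using D' vector_derivative_at by blast
  have DW: "\<And>s. s \<in> {0..1} - T \<Longrightarrow> D s \<in> WW"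
  proof -
    fix s assume s: "s \<in> {0..1} - T"
    then have "s \<in> {0<..<1}" using T unfolding T_def by auto
    moreover have "g differentiable (at s)" using D'[OF s] differentiableI_vector by blast
    ultimately show "D s \<in> WW" using dW vd[OF s] by metis
  qed
  show ?thesis using that[OF T D' vd DW gc] W g0 g1 by blast
qed



lemma WW_iff: "(a, b) \<in> WW \<longleftrightarrow> 0 \<le> b \<and> 0 \<le> a + b" unfolding WW_def by auto

lemma WW_convex:
  assumes "a \<in> WW" "b \<in> WW" "0 \<le> t" "t \<le> 1"
  shows "a + t *\<^sub>R (b - a) \<in> WW"
proof -
  obtain a1 a2 b1 b2 where ab: "a = (a1, a2)" "b = (b1, b2)" by (cases a, cases b) auto
  have h: "0 \<le> a2" "0 \<le> a1 + a2" "0 \<le> b2" "0 \<le> b1 + b2" using assms(1,2) ab by (auto simp: WW_iff)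
  have "0 \<le> (1 - t) * a2 + t * b2" "0 \<le> (1 - t) * (a1 + a2) + t * (b1 + b2)"
    using h assms(3,4) by (simp_all add: add_nonneg_nonneg)
  then show ?thesis using ab by (simp add: WW_iff algebra_simps)
qed

lemma WW_scale: "a \<in> WW \<Longrightarrow> 0 \<le> t \<Longrightarrow> t *\<^sub>R a \<in> WW"
  by (cases a) (auto simp: WW_iff simp flip: distrib_left)

lemma h_path:
  assumes g: "g \<in> paths_H p0" and s0: "0 \<le> \<sigma>" "\<sigma> < 1" and p: "p \<in> WW" and dw: "p - g \<sigma> \<in> WW"
    and wdef: "w = inverse (1 - \<sigma>) *\<^sub>R (p - g \<sigma>)"
  shows "(\<lambda>s. if s \<le> \<sigma> then g s else g \<sigma> + (s - \<sigma>) *\<^sub>R w) \<in> paths_H p"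
proof -
  define h where "h = (\<lambda>s. if s \<le> \<sigma> then g s else g \<sigma> + (s - \<sigma>) *\<^sub>R w)"
  define a where "a = (\<lambda>s. g \<sigma> + (s - \<sigma>) *\<^sub>R w)"
  have pc: "g piecewise_C1_differentiable_on {0..1}" and W: "\<forall>s\<in>{0..1}. g s \<in> WW"
    and g0: "g 0 = (0,0)"
    and dW: "\<forall>s\<in>{0<..<1}. g differentiable (at s) \<longrightarrow> vector_derivative g (at s) \<in> WW"
    using g unfolding paths_H_def by auto
  have ww: "w \<in> WW" unfolding wdef using s0 dw by (intro WW_scale) auto
  have ad: "(a has_vector_derivative w) (at t within S)" for t S
    unfolding a_def by (auto intro!: derivative_eq_intros)
  have "h piecewise_C1_differentiable_on {0..1}"
    unfolding h_def
  proof (rule piecewise_C1_differentiable_cases)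
    show "g piecewise_C1_differentiable_on {0..\<sigma>}"
      using pc piecewise_C1_differentiable_on_subset s0 by fastforce
    show "(\<lambda>s. g \<sigma> + (s - \<sigma>) *\<^sub>R w) piecewise_C1_differentiable_on {\<sigma>..1}"
      by (intro C1_differentiable_imp_piecewise derivative_intros)
  qed (use s0 in auto)
  moreover have "h s \<in> WW" if "s \<in> {0..1}" for s
  proof (cases "s \<le> \<sigma>")
    case True then show ?thesis unfolding h_def using W that by auto
  next
    case False
    have gs: "g \<sigma> \<in> WW" using W s0 by auto
    have "h s = g \<sigma> + ((s - \<sigma>) / (1 - \<sigma>)) *\<^sub>R (p - g \<sigma>)"
      unfolding h_def wdef using False by (simp add: divide_inverse)
    moreover have "0 \<le> (s - \<sigma>) / (1 - \<sigma>)" "(s - \<sigma>) / (1 - \<sigma>) \<le> 1" using False that s0 by auto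
    ultimately show ?thesis using WW_convex[OF gs p] by simp
  qed
  moreover have "h 0 = (0,0)" unfolding h_def using s0 g0 by simp
  moreover have "h 1 = p"
  proof -
    have "h 1 = g \<sigma> + ((1 - \<sigma>) * inverse (1 - \<sigma>)) *\<^sub>R (p - g \<sigma>)"
      unfolding h_def wdef using s0 by simp
    also have "(1 - \<sigma>) * inverse (1 - \<sigma>) = 1" using s0 by simp
    finally show ?thesis by simp
  qed
  moreover have "vector_derivative h (at s) \<in> WW"
    if s: "s \<in> {0<..<1}" and hd: "h differentiable (at s)" for s
  proof -
    obtain D' where D': "(h has_vector_derivative D') (at s)"
      using hd vector_derivative_works by blast
    then have vd: "vector_derivative h (at s) = D'" by (rule vector_derivative_at)
    show ?thesis
    proof (cases "s < \<sigma>")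
      case True
      have "(g has_vector_derivative D') (at s)"
        by (rule has_vector_derivative_transform_within_open[OF D', of "{..<\<sigma>}"]) (use True in \<open>auto simp: h_def\<close>)
      then have "g differentiable (at s)" "vector_derivative g (at s) = D'"
        using differentiableI_vector vector_derivative_at by blast+
      then show ?thesis using dW s vd by auto
    next
      case False
      have ha: "h x = a x" if "s \<le> x" for x
      proof (cases "x \<le> \<sigma>")
        case True then have "x = \<sigma>" using False that by linarith
        then show ?thesis by (simp add: h_def a_def)
      qed (simp add: h_def a_def)
      have "(a has_vector_derivative D') (at s within {s..})"
        by (rule has_vector_derivative_weaken[OF D'[THEN has_vector_derivative_at_within, of UNIV]])
           (use ha in auto)
      moreover have "(a has_vector_derivative w) (at s within {s..})" by (rule ad)
      moreover have "at s within {s..} \<noteq> bot" by (simp add: at_within_Ici_at_right)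
      ultimately have "D' = w" using vector_derivative_unique_within by blast
      then show ?thesis using vd ww by simp
    qed
  qed
  ultimately show ?thesis unfolding paths_H_def h_def[symmetric] by blast
qed



lemma two_sqrt_le:
  assumes "0 \<le> u" "0 \<le> v" "0 < e"
  shows "2 * (sqrt u * sqrt v) \<le> e * u + v / e"
proof -
  define p where "p = sqrt u"
  define q where "q = sqrt v"
  have u: "u = p^2" and v: "v = q^2" using assms unfolding p_def q_def by auto
  have "0 \<le> (e * p - q)^2 / e" using assms by simp
  also have "(e * p - q)^2 / e = e * p^2 + q^2 / e - 2 * (p * q)"
    using assms by (simp add: field_simps power2_eq_square)
  finally have "2 * (p * q) \<le> e * u + v / e" unfolding u v by simp
  then show ?thesis by (simp add: p_def q_def)
qed

lemma gam_expand:
  assumes "0 \<le> b" "0 \<le> a + b"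
  shows "gam (a, b) = (a + b) + b + 2 * (sqrt (a + b) * sqrt b)"
  using assms unfolding gam_def by (simp add: power2_eq_square algebra_simps)

lemma gam_bound_A:
  assumes "0 \<le> b" "0 \<le> a + b" "0 < e" "0 \<le> k" "k \<le> M"
  shows "gam (a, b) * k \<le> a * k + M * (2 * b + e * (a + b) + b / e)"
proof -
  have "gam (a, b) \<le> a + (2 * b + e * (a + b) + b / e)"
    using gam_expand[OF assms(1,2)] two_sqrt_le[OF assms(2,1,3)] by linarith
  then have "gam (a, b) * k \<le> (a + (2 * b + e * (a + b) + b / e)) * k"
    using assms(4) by (rule mult_right_mono)
  also have "\<dots> \<le> a * k + M * (2 * b + e * (a + b) + b / e)"
  proof -
    have "0 \<le> 2 * b + e * (a + b) + b / e" using assms by simp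
    then have "(2 * b + e * (a + b) + b / e) * k \<le> (2 * b + e * (a + b) + b / e) * M"
      using mult_left_mono[OF assms(5)] by blast
    then show ?thesis by (simp add: algebra_simps)
  qed
  finally show ?thesis .
qed

lemma gam_bound_B:
  assumes "0 \<le> b" "0 \<le> a + b" "0 < e" "0 \<le> k" "k \<le> M"
  shows "gam (a, b) * k \<le> - a * k + M * (2 * (a + b) + e * b + (a + b) / e)"
proof -
  have "2 * (sqrt (a + b) * sqrt b) \<le> e * b + (a + b) / e"
    using two_sqrt_le[OF assms(1,2,3)] by (simp add: mult.commute)
  then have "gam (a, b) \<le> - a + (2 * (a + b) + e * b + (a + b) / e)"
    using gam_expand[OF assms(1,2)] by (simp add: algebra_simps)
  then have "gam (a, b) * k \<le> (- a + (2 * (a + b) + e * b + (a + b) / e)) * k"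
    using assms(4) by (rule mult_right_mono)
  also have "\<dots> \<le> - a * k + M * (2 * (a + b) + e * b + (a + b) / e)"
  proof -
    have "0 \<le> 2 * (a + b) + e * b + (a + b) / e" using assms by simp
    then have "(2 * (a + b) + e * b + (a + b) / e) * k \<le> (2 * (a + b) + e * b + (a + b) / e) * M"
      using mult_left_mono[OF assms(5)] by blast
    then show ?thesis by (simp add: algebra_simps)
  qed
  finally show ?thesis .
qed

lemma gam_ge_abs:
  assumes "0 \<le> b" "0 \<le> a + b"
  shows "\<bar>a\<bar> \<le> gam (a, b)"
proof -
  have "0 \<le> sqrt (a + b) * sqrt b" using assms by simp
  then show ?thesis using gam_expand[OF assms] assms by linarith
qed

lemma gam_le:
  assumes "0 \<le> b" "0 \<le> a + b"
  shows "gam (a, b) \<le> 2 * ((a + b) + b)"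
  using gam_expand[OF assms] two_sqrt_le[OF assms(2,1), of 1] by simp

lemma integral_le_finite:
  fixes f g :: "real \<Rightarrow> real"
  assumes "f integrable_on {a..b}" "g integrable_on {a..b}" "finite T"
    "\<And>s. s \<in> {a<..<b} - T \<Longrightarrow> f s \<le> g s"
  shows "integral {a..b} f \<le> integral {a..b} g"
proof -
  define T' where "T' = insert a (insert b T)"
  have fin: "finite T'" using assms(3) unfolding T'_def by simp
  define f' where "f' s = (if s \<in> T' then g s else f s)" for s
  have eq: "integral {a..b} f' = integral {a..b} f"
    by (rule integral_spike[of T']) (use fin negligible_finite in \<open>auto simp: f'_def\<close>)
  have fi: "f' integrable_on {a..b}"
    by (rule integrable_spike_finite[OF fin _ assms(1)]) (auto simp: f'_def)
  have "integral {a..b} f' \<le> integral {a..b} g"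
    by (rule integral_le[OF fi assms(2)]) (use assms(4) in \<open>auto simp: f'_def T'_def\<close>)
  then show ?thesis using eq by simp
qed



lemma main_est:
  fixes \<kappa> :: "real \<Rightarrow> real"
  assumes nn: "\<forall>t. 0 \<le> \<kappa> t" and bd: "\<forall>t. \<kappa> t \<le> M"
    and loc: "\<forall>t. \<exists>e>0. \<forall>s. \<bar>s - t\<bar> < e \<longrightarrow> \<kappa> s \<le> \<kappa> t"
    and xy: "(x, y) \<in> WW" and d0: "0 < \<delta>" and d1: "\<delta> \<le> 1"
    and g: "g \<in> paths_H (x, y + \<delta>)"
    and gi: "(\<lambda>s. gam (vector_derivative g (at s)) * \<kappa> (fst (g s))) integrable_on {0..1}"
  shows "\<exists>h\<in>paths_H (x, y). integral {0..1} (\<lambda>s. gam (vector_derivative g (at s)) * \<kappa> (fst (g s)))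
          \<le> integral {0..1} (\<lambda>s. gam (vector_derivative h (at s)) * \<kappa> (fst (h s))) + M * (x + 2 * y + 4) * sqrt \<delta>"
proof -
  obtain T D where T: "finite T" "0 \<in> T" "1 \<in> T"
    and Dd: "\<And>s. s \<in> {0..1} - T \<Longrightarrow> (g has_vector_derivative D s) (at s)"
    and vdg: "\<And>s. s \<in> {0..1} - T \<Longrightarrow> vector_derivative g (at s) = D s"
    and DW: "\<And>s. s \<in> {0..1} - T \<Longrightarrow> D s \<in> WW"
    and gc: "continuous_on {0..1} g" and gW: "\<And>s. s \<in> {0..1} \<Longrightarrow> g s \<in> WW"
    and g0: "g 0 = (0,0)" and g1: "g 1 = (x, y + \<delta>)"
    using path_data[OF g] by metis
  have M0: "0 \<le> M" using nn bd by (meson order_trans)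
  define A where "A s = fst (D s)" for s
  define B where "B s = snd (D s)" for s
  define f where "f s = fst (g s)" for s
  define V where "V s = snd (g s)" for s
  define U where "U s = f s + V s" for s
  have AB: "0 \<le> B s" "0 \<le> A s + B s" if "s \<in> {0..1} - T" for s
    using DW[OF that] unfolding A_def B_def by (cases "D s"; auto simp: WW_iff)+
  have DAB: "D s = (A s, B s)" for s unfolding A_def B_def by simp
  have fd: "(f has_real_derivative A s) (at s)" if "s \<in> {0..1} - T" for s
    using hvd_fst[OF Dd[OF that]] unfolding f_def A_def has_real_derivative_iff_has_vector_derivative .
  have Vd: "(V has_real_derivative B s) (at s)" if "s \<in> {0..1} - T" for s
    using hvd_snd[OF Dd[OF that]] unfolding V_def B_def has_real_derivative_iff_has_vector_derivative .
  have Ud: "(U has_real_derivative A s + B s) (at s)" if "s \<in> {0..1} - T" for s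
    unfolding U_def[abs_def] using fd[OF that] Vd[OF that] by (rule DERIV_add)
  have fc: "continuous_on {0..1} f" unfolding f_def using gc by (intro continuous_on_fst)
  have Vc: "continuous_on {0..1} V" unfolding V_def using gc by (intro continuous_on_snd)
  have Uc: "continuous_on {0..1} U" unfolding U_def using fc Vc by (intro continuous_on_add)
  have ftcU: "((\<lambda>s. A s + B s) has_integral U \<beta> - U \<alpha>) {\<alpha>..\<beta>}" if "0 \<le> \<alpha>" "\<alpha> \<le> \<beta>" "\<beta> \<le> 1" for \<alpha> \<beta>
  proof (rule fundamental_theorem_of_calculus_interior_strong[OF T(1) that(2)])
    show "\<And>s. s \<in> {\<alpha><..<\<beta>} - T \<Longrightarrow> (U has_vector_derivative A s + B s) (at s)"
      using Ud that by (auto simp: has_real_derivative_iff_has_vector_derivative)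
    show "continuous_on {\<alpha>..\<beta>} U" using Uc that continuous_on_subset by fastforce
  qed
  have ftcV: "(B has_integral V \<beta> - V \<alpha>) {\<alpha>..\<beta>}" if "0 \<le> \<alpha>" "\<alpha> \<le> \<beta>" "\<beta> \<le> 1" for \<alpha> \<beta>
  proof (rule fundamental_theorem_of_calculus_interior_strong[OF T(1) that(2)])
    show "\<And>s. s \<in> {\<alpha><..<\<beta>} - T \<Longrightarrow> (V has_vector_derivative B s) (at s)"
      using Vd that by (auto simp: has_real_derivative_iff_has_vector_derivative)
    show "continuous_on {\<alpha>..\<beta>} V" using Vc that continuous_on_subset by fastforce
  qed
  have f1: "f 1 = x" and V1: "V 1 = y + \<delta>" and U1: "U 1 = x + y + \<delta>"
    using g1 unfolding f_def V_def U_def by auto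
  have U0: "U 0 = 0" and V0: "V 0 = 0" using g0 unfolding U_def f_def V_def by auto
  have xy': "0 \<le> y" "0 \<le> x + y" using xy by (auto simp: WW_iff)
  have gWs: "0 \<le> V s" "0 \<le> U s" if "s \<in> {0..1}" for s
    using gW[OF that] unfolding U_def V_def f_def by (cases "g s"; auto simp: WW_iff)+
  define m where "m s = max (U s - (x + y)) (V s - y)" for s
  have mc: "continuous_on {0..1} m" unfolding m_def
    by (intro continuous_on_max continuous_on_diff Uc Vc continuous_on_const)
  obtain \<sigma> where s01: "0 \<le> \<sigma>" "\<sigma> \<le> 1" and ms: "m \<sigma> = 0"
    using IVT'[of m 0 0 1] mc U0 V0 U1 V1 xy' d0 unfolding m_def by force
  have s1: "\<sigma> < 1" using ms s01 d0 U1 V1 unfolding m_def by (cases "\<sigma> = 1") auto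
  have Us: "U \<sigma> \<le> x + y" "V \<sigma> \<le> y" and Ucase: "U \<sigma> = x + y \<or> V \<sigma> = y"
    using ms unfolding m_def by (auto simp: max_def split: if_splits)
  have pW: "(x, y) - g \<sigma> \<in> WW"
    using Us unfolding U_def f_def V_def by (cases "g \<sigma>") (auto simp: WW_iff)
  define w where "w = inverse (1 - \<sigma>) *\<^sub>R ((x, y) - g \<sigma>)"
  define h where "h = (\<lambda>s. if s \<le> \<sigma> then g s else g \<sigma> + (s - \<sigma>) *\<^sub>R w)"
  have hp: "h \<in> paths_H (x, y)" unfolding h_def
    by (rule h_path[OF g s01(1) s1 xy pW w_def])
  have fstw: "fst w = (x - f \<sigma>) / (1 - \<sigma>)" unfolding w_def f_def by (simp add: divide_inverse mult.commute)
  obtain smin where "smin \<in> {0..1}" and smin: "\<And>s. s \<in> {0..1} \<Longrightarrow> f smin \<le> f s"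
    using continuous_attains_inf[OF compact_Icc _ fc] by force
  define L where "L = min (f smin) x - 1"
  have fL: "L < f s" if "s \<in> {0..1}" for s using smin[OF that] unfolding L_def by simp
  define H where "H z = integral {L..z} \<kappa>" for z
  define Fg where "Fg s = gam (vector_derivative g (at s)) * \<kappa> (fst (g s))" for s
  define Fh where "Fh s = gam (vector_derivative h (at s)) * \<kappa> (fst (h s))" for s
  define \<phi> where "\<phi> s = f \<sigma> + (s - \<sigma>) * fst w" for s
  have \<phi>1: "\<phi> 1 = x" unfolding \<phi>_def fstw using s1 by simp
  have \<phi>s: "\<phi> \<sigma> = f \<sigma>" unfolding \<phi>_def by simp
  have split_g: "integral {0..1} Fg = integral {0..\<sigma>} Fg + integral {\<sigma>..1} Fg"
    using Henstock_Kurzweil_Integration.integral_combine[OF s01(1) s1[THEN less_imp_le], of Fg] gi unfolding Fg_def by simp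
  have Fgi2: "Fg integrable_on {\<sigma>..1}"
    using integrable_subinterval_real[OF gi[folded Fg_def[abs_def]]] s01 by auto
  have hg_eq: "Fh s = Fg s" if "s \<in> {0..\<sigma>} - insert \<sigma> T" for s
  proof -
    have s: "s < \<sigma>" "s \<in> {0..1} - T" using that s1 by auto
    have "(h has_vector_derivative D s) (at s)"
      by (rule has_vector_derivative_transform_within_open[OF Dd[OF s(2)], of "{..<\<sigma>}"])
         (use s in \<open>auto simp: h_def\<close>)
    then have "vector_derivative h (at s) = vector_derivative g (at s)"
      using vector_derivative_at vdg[OF s(2)] by metis
    moreover have "h s = g s" using s by (simp add: h_def)
    ultimately show ?thesis unfolding Fh_def Fg_def by simp
  qed
  have Fgi1: "Fg integrable_on {0..\<sigma>}"
    using integrable_subinterval_real[OF gi[folded Fg_def[abs_def]]] s01 s1 by auto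
  have Fhi1: "Fh integrable_on {0..\<sigma>}"
    by (rule integrable_spike_finite[OF _ _ Fgi1, of "insert \<sigma> T"]) (use T hg_eq in auto)
  have int1: "integral {0..\<sigma>} Fh = integral {0..\<sigma>} Fg"
    by (rule integral_spike[of "insert \<sigma> T"]) (use T hg_eq negligible_finite in auto)
  define Rh where "Rh s = gam w * \<kappa> (\<phi> s)" for s
  have hR_eq: "Fh s = Rh s" if "s \<in> {\<sigma>..1} - {\<sigma>}" for s
  proof -
    have s: "\<sigma> < s" using that by auto
    have "((\<lambda>t. g \<sigma> + (t - \<sigma>) *\<^sub>R w) has_vector_derivative w) (at s)"
    proof -
      have "((\<lambda>t. g \<sigma> + (t - \<sigma>) *\<^sub>R w) has_vector_derivative w) (at s within UNIV)"
        by (auto intro!: derivative_eq_intros)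
      then show ?thesis by simp
    qed
    then have "(h has_vector_derivative w) (at s)"
      by (rule has_vector_derivative_transform_within_open[of _ _ _ "{\<sigma><..}"]) (use s in \<open>auto simp: h_def\<close>)
    then have "vector_derivative h (at s) = w" by (rule vector_derivative_at)
    moreover have "fst (h s) = \<phi> s" using s by (simp add: h_def \<phi>_def f_def)
    ultimately show ?thesis unfolding Fh_def Rh_def by simp
  qed
  have \<phi>c: "continuous_on {\<sigma>..1} \<phi>" unfolding \<phi>_def by (intro continuous_intros)
  have Rhi: "Rh integrable_on {\<sigma>..1}" unfolding Rh_def
    using integrable_on_cmult_left[OF kappa_comp_integrable[OF nn bd loc \<phi>c], of "gam w"] by simp
  have Fhi2: "Fh integrable_on {\<sigma>..1}"
    by (rule integrable_spike_finite[OF _ _ Rhi, of "{\<sigma>}"]) (use hR_eq in auto)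
  have int2: "integral {\<sigma>..1} Fh = integral {\<sigma>..1} Rh"
    by (rule integral_spike[of "{\<sigma>}"]) (use hR_eq in auto)
  have split_h: "integral {0..1} Fh = integral {0..\<sigma>} Fh + integral {\<sigma>..1} Fh"
    using Henstock_Kurzweil_Integration.integral_combine[OF s01(1) s1[THEN less_imp_le], of Fh] Henstock_Kurzweil_Integration.integrable_combine[OF s01(1) s1[THEN less_imp_le] Fhi1 Fhi2]
    by simp
  have \<phi>L: "L < \<phi> s" if "s \<in> {\<sigma>..1}" for s
  proof -
    define t where "t = (s - \<sigma>) / (1 - \<sigma>)"
    have t: "0 \<le> t" "t \<le> 1" using that s1 unfolding t_def by auto
    have "\<phi> s = f \<sigma> + t * (x - f \<sigma>)" unfolding \<phi>_def fstw t_def by simp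
    also have "\<dots> = (1 - t) * f \<sigma> + t * x" by (simp add: algebra_simps)
    finally have eq: "\<phi> s = (1 - t) * f \<sigma> + t * x" .
    have "min (f smin) x \<le> (1 - t) * f \<sigma> + t * x"
    proof -
      have "f smin \<le> f \<sigma>" using smin s01 by auto
      then have "(1 - t) * min (f smin) x \<le> (1 - t) * f \<sigma>" "t * min (f smin) x \<le> t * x"
        using t by (auto intro!: mult_left_mono)
      then show ?thesis by (simp add: algebra_simps)
    qed
    then show ?thesis unfolding eq L_def by simp
  qed
  have cr\<phi>: "((\<lambda>s. fst w * \<kappa> (\<phi> s)) has_integral (H x - H (f \<sigma>))) {\<sigma>..1}"
  proof -
    have "((\<lambda>s. fst w * \<kappa> (\<phi> s)) has_integral (integral {L..\<phi> 1} \<kappa> - integral {L..\<phi> \<sigma>} \<kappa>)) {\<sigma>..1}"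
    proof (rule chain_rule[OF nn bd loc finite.emptyI s1[THEN less_imp_le] \<phi>c])
      show "(\<phi> has_real_derivative fst w) (at s)" for s
        unfolding \<phi>_def by (auto intro!: derivative_eq_intros)
      show "(\<lambda>s. \<bar>fst w\<bar>) integrable_on {\<sigma>..1}" by (rule integrable_const_ivl)
    qed (use \<phi>L in auto)
    then show ?thesis unfolding H_def \<phi>1 \<phi>s .
  qed
  define f'' where "f'' s = (if s \<in> T then 0 else A s)" for s
  define dd where "dd s = (if s \<in> T then 0 else (A s + B s) + B s)" for s
  have ddi: "dd integrable_on {\<sigma>..1}"
  proof (rule integrable_spike_finite[OF T(1)])
    show "(\<lambda>s. (A s + B s) + B s) integrable_on {\<sigma>..1}"
      using integrable_add[OF has_integral_integrable[OF ftcU[OF s01(1) s1[THEN less_imp_le] order_refl]]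
              has_integral_integrable[OF ftcV[OF s01(1) s1[THEN less_imp_le] order_refl]]] by simp
  qed (auto simp: dd_def)
  have crf0: "((\<lambda>s. f'' s * \<kappa> (f s)) has_integral (integral {L..f 1} \<kappa> - integral {L..f \<sigma>} \<kappa>)) {\<sigma>..1}"
  proof (rule chain_rule[OF nn bd loc T(1) s1[THEN less_imp_le]])
    show "continuous_on {\<sigma>..1} f" using fc continuous_on_subset s01 by fastforce
    show "(f has_real_derivative f'' s) (at s)" if "s \<in> {\<sigma><..<1} - T" for s
      using fd[of s] that s01 unfolding f''_def by auto
    show "dd integrable_on {\<sigma>..1}" by (rule ddi)
    show "\<bar>f'' s\<bar> \<le> dd s" if "s \<in> {\<sigma>..1}" for s
    proof (cases "s \<in> T")
      case False
      then have "s \<in> {0..1} - T" using that s01 by auto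
      then show ?thesis using AB[of s] unfolding f''_def dd_def using False by auto
    qed (simp add: f''_def dd_def)
    show "L < f s" if "s \<in> {\<sigma>..1}" for s using fL that s01 by auto
  qed
  have crf: "((\<lambda>s. A s * \<kappa> (f s)) has_integral (H x - H (f \<sigma>))) {\<sigma>..1}"
  proof -
    have "((\<lambda>s. A s * \<kappa> (f s)) has_integral (H x - H (f \<sigma>))) {\<sigma>..1} \<longleftrightarrow>
          ((\<lambda>s. f'' s * \<kappa> (f s)) has_integral (H x - H (f \<sigma>))) {\<sigma>..1}"
      by (rule has_integral_spike_finite_eq[OF T(1)]) (auto simp: f''_def)
    then show ?thesis using crf0 unfolding H_def f1 by simp
  qed
  define e where "e = sqrt \<delta>"
  have e0: "0 < e" unfolding e_def using d0 by simp
  have de: "\<delta> \<le> e"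
  proof -
    have "e \<le> 1" unfolding e_def using d1 by simp
    then have "e * e \<le> e * 1" using mult_left_mono[of e 1 e] e0 by simp
    moreover have "e * e = \<delta>" unfolding e_def using d0 by simp
    ultimately show ?thesis by simp
  qed
  have dee: "\<delta> / e = e" unfolding e_def using d0 by (simp add: real_div_sqrt)
  have intA: "integral {\<sigma>..1} (\<lambda>s. A s * \<kappa> (f s)) = H x - H (f \<sigma>)" using crf by (rule integral_unique)
  have intAi: "(\<lambda>s. A s * \<kappa> (f s)) integrable_on {\<sigma>..1}" using crf by (rule has_integral_integrable)
  have iU: "integral {\<sigma>..1} (\<lambda>s. A s + B s) = U 1 - U \<sigma>"
    using ftcU[OF s01(1) s1[THEN less_imp_le] order_refl] by (rule integral_unique)
  have iV: "integral {\<sigma>..1} B = V 1 - V \<sigma>"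
    using ftcV[OF s01(1) s1[THEN less_imp_le] order_refl] by (rule integral_unique)
  have iUi: "(\<lambda>s. A s + B s) integrable_on {\<sigma>..1}"
    using ftcU[OF s01(1) s1[THEN less_imp_le] order_refl] by (rule has_integral_integrable)
  have iVi: "B integrable_on {\<sigma>..1}"
    using ftcV[OF s01(1) s1[THEN less_imp_le] order_refl] by (rule has_integral_integrable)
  have Fg_eq: "Fg s = gam (A s, B s) * \<kappa> (f s)" if "s \<in> {0..1} - T" for s
    unfolding Fg_def f_def using vdg[OF that] DAB by simp
  have Uss: "0 \<le> U \<sigma>" "0 \<le> V \<sigma>" using gWs s01 by auto
  note fU = ftcU[OF s01(1) s1[THEN less_imp_le] order_refl]
  note fV = ftcV[OF s01(1) s1[THEN less_imp_le] order_refl]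
  have wW: "\<bar>fst w\<bar> \<le> gam w"
  proof -
    have "w \<in> WW" unfolding w_def using WW_scale[OF pW, of "inverse (1 - \<sigma>)"] s1 by simp
    then show ?thesis using gam_ge_abs[of "snd w" "fst w"] by (cases w) (auto simp: WW_iff)
  qed
  have main2: "integral {\<sigma>..1} Fg \<le> integral {\<sigma>..1} Fh + M * (x + 2 * y + 4) * sqrt \<delta>"
    using Ucase
  proof
    assume Ueq: "U \<sigma> = x + y"
    define R where "R s = - (A s * \<kappa> (f s)) + (2 * M) * (A s + B s) + (M * e) * B s + (M / e) * (A s + B s)" for s
    have p2: "((\<lambda>s. (2 * M) * (A s + B s)) has_integral (2 * M) * (U 1 - U \<sigma>)) {\<sigma>..1}"
      by (rule has_integral_mult_right[OF fU])
    have p3: "((\<lambda>s. (M * e) * B s) has_integral (M * e) * (V 1 - V \<sigma>)) {\<sigma>..1}"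
      by (rule has_integral_mult_right[OF fV])
    have p4: "((\<lambda>s. (M / e) * (A s + B s)) has_integral (M / e) * (U 1 - U \<sigma>)) {\<sigma>..1}"
      by (rule has_integral_mult_right[OF fU])
    have RI: "(R has_integral (- (H x - H (f \<sigma>)) + (2 * M) * (U 1 - U \<sigma>) + (M * e) * (V 1 - V \<sigma>) + (M / e) * (U 1 - U \<sigma>))) {\<sigma>..1}"
      unfolding R_def by (rule has_integral_add[OF has_integral_add[OF has_integral_add[OF has_integral_neg[OF crf] p2] p3] p4])
    have "integral {\<sigma>..1} Fg \<le> integral {\<sigma>..1} R"
    proof (rule integral_le_finite[OF Fgi2 has_integral_integrable[OF RI] T(1)])
      fix s assume s: "s \<in> {\<sigma><..<1} - T"
      then have s': "s \<in> {0..1} - T" using s01 by auto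
      have "R s = - (A s * \<kappa> (f s)) + M * (2 * (A s + B s) + e * B s + (A s + B s) / e)"
        unfolding R_def using e0 by (simp add: field_simps)
      then show "Fg s \<le> R s" unfolding Fg_eq[OF s']
        using gam_bound_B[OF AB[OF s'] e0 nn[rule_format] bd[rule_format]] by simp
    qed
    also have "integral {\<sigma>..1} R = - (H x - H (f \<sigma>)) + M * (2 * \<delta> + e * (V 1 - V \<sigma>) + \<delta> / e)"
      using integral_unique[OF RI] U1 Ueq by (simp add: field_simps)
    also have "\<dots> \<le> integral {\<sigma>..1} Fh + M * (x + 2 * y + 4) * sqrt \<delta>"
    proof -
      have "- (H x - H (f \<sigma>)) = integral {\<sigma>..1} (\<lambda>s. - (fst w * \<kappa> (\<phi> s)))"
        using integral_unique[OF has_integral_neg[OF cr\<phi>]] by simp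
      also have "\<dots> \<le> integral {\<sigma>..1} Rh"
      proof (rule integral_le)
        show "(\<lambda>s. - (fst w * \<kappa> (\<phi> s))) integrable_on {\<sigma>..1}"
          using has_integral_integrable[OF has_integral_neg[OF cr\<phi>]] .
        show "Rh integrable_on {\<sigma>..1}" by (rule Rhi)
        fix s
        have "- fst w \<le> gam w" using wW by linarith
        then have "(- fst w) * \<kappa> (\<phi> s) \<le> gam w * \<kappa> (\<phi> s)"
          using nn by (intro mult_right_mono) auto
        then show "- (fst w * \<kappa> (\<phi> s)) \<le> Rh s" unfolding Rh_def by simp
      qed
      also have "\<dots> = integral {\<sigma>..1} Fh" using int2 by simp
      finally have 1: "- (H x - H (f \<sigma>)) \<le> integral {\<sigma>..1} Fh" .
      have "2 * \<delta> + e * (V 1 - V \<sigma>) + \<delta> / e \<le> (x + 2 * y + 4) * e"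
      proof -
        have a1: "e * (V 1 - V \<sigma>) \<le> e * (y + 1)" using V1 Uss d1 e0 by (intro mult_left_mono) auto
        have "2 * \<delta> + e * (V 1 - V \<sigma>) + \<delta> / e \<le> 2 * e + e * (y + 1) + e" using a1 de dee by linarith
        also have "\<dots> = (x + 2 * y + 4) * e - (x + y) * e"
          by (simp add: algebra_simps)
        also have "\<dots> \<le> (x + 2 * y + 4) * e" using xy' e0 by simp
        finally show ?thesis .
      qed
      then have "M * (2 * \<delta> + e * (V 1 - V \<sigma>) + \<delta> / e) \<le> M * ((x + 2 * y + 4) * e)"
        using M0 by (rule mult_left_mono)
      then show ?thesis using 1 unfolding e_def by (simp add: mult.assoc)
    qed
    finally show ?thesis .
  next
    assume Veq: "V \<sigma> = y"
    define R where "R s = A s * \<kappa> (f s) + (2 * M) * B s + (M * e) * (A s + B s) + (M / e) * B s" for s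
    have p2: "((\<lambda>s. (2 * M) * B s) has_integral (2 * M) * (V 1 - V \<sigma>)) {\<sigma>..1}"
      by (rule has_integral_mult_right[OF fV])
    have p3: "((\<lambda>s. (M * e) * (A s + B s)) has_integral (M * e) * (U 1 - U \<sigma>)) {\<sigma>..1}"
      by (rule has_integral_mult_right[OF fU])
    have p4: "((\<lambda>s. (M / e) * B s) has_integral (M / e) * (V 1 - V \<sigma>)) {\<sigma>..1}"
      by (rule has_integral_mult_right[OF fV])
    have RI: "(R has_integral ((H x - H (f \<sigma>)) + (2 * M) * (V 1 - V \<sigma>) + (M * e) * (U 1 - U \<sigma>) + (M / e) * (V 1 - V \<sigma>))) {\<sigma>..1}"
      unfolding R_def by (rule has_integral_add[OF has_integral_add[OF has_integral_add[OF crf p2] p3] p4])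
    have "integral {\<sigma>..1} Fg \<le> integral {\<sigma>..1} R"
    proof (rule integral_le_finite[OF Fgi2 has_integral_integrable[OF RI] T(1)])
      fix s assume s: "s \<in> {\<sigma><..<1} - T"
      then have s': "s \<in> {0..1} - T" using s01 by auto
      have "R s = A s * \<kappa> (f s) + M * (2 * B s + e * (A s + B s) + B s / e)"
        unfolding R_def using e0 by (simp add: field_simps)
      then show "Fg s \<le> R s" unfolding Fg_eq[OF s']
        using gam_bound_A[OF AB[OF s'] e0 nn[rule_format] bd[rule_format]] by simp
    qed
    also have "integral {\<sigma>..1} R = (H x - H (f \<sigma>)) + M * (2 * \<delta> + e * (U 1 - U \<sigma>) + \<delta> / e)"
      using integral_unique[OF RI] V1 Veq by (simp add: field_simps)
    also have "\<dots> \<le> integral {\<sigma>..1} Fh + M * (x + 2 * y + 4) * sqrt \<delta>"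
    proof -
      have "H x - H (f \<sigma>) = integral {\<sigma>..1} (\<lambda>s. fst w * \<kappa> (\<phi> s))"
        using integral_unique[OF cr\<phi>] by simp
      also have "\<dots> \<le> integral {\<sigma>..1} Rh"
      proof (rule integral_le)
        show "(\<lambda>s. fst w * \<kappa> (\<phi> s)) integrable_on {\<sigma>..1}"
          using has_integral_integrable[OF cr\<phi>] .
        show "Rh integrable_on {\<sigma>..1}" by (rule Rhi)
        fix s
        have "fst w \<le> gam w" using wW by linarith
        then have "fst w * \<kappa> (\<phi> s) \<le> gam w * \<kappa> (\<phi> s)"
          using nn by (intro mult_right_mono) auto
        then show "fst w * \<kappa> (\<phi> s) \<le> Rh s" unfolding Rh_def by simp
      qed
      also have "\<dots> = integral {\<sigma>..1} Fh" using int2 by simp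
      finally have 1: "H x - H (f \<sigma>) \<le> integral {\<sigma>..1} Fh" .
      have "2 * \<delta> + e * (U 1 - U \<sigma>) + \<delta> / e \<le> (x + 2 * y + 4) * e"
      proof -
        have a1: "e * (U 1 - U \<sigma>) \<le> e * (x + y + 1)" using U1 Uss d1 e0 by (intro mult_left_mono) auto
        have "2 * \<delta> + e * (U 1 - U \<sigma>) + \<delta> / e \<le> 2 * e + e * (x + y + 1) + e" using a1 de dee by linarith
        also have "\<dots> = (x + 2 * y + 4) * e - y * e"
          by (simp add: algebra_simps)
        also have "\<dots> \<le> (x + 2 * y + 4) * e" using xy' e0 by simp
        finally show ?thesis .
      qed
      then have "M * (2 * \<delta> + e * (U 1 - U \<sigma>) + \<delta> / e) \<le> M * ((x + 2 * y + 4) * e)"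
        using M0 by (rule mult_left_mono)
      then show ?thesis using 1 unfolding e_def by (simp add: mult.assoc)
    qed
    finally show ?thesis .
  qed
  have "integral {0..1} Fg \<le> integral {0..1} Fh + M * (x + 2 * y + 4) * sqrt \<delta>"
    using split_g split_h int1 main2 by linarith
  then show ?thesis using hp unfolding Fg_def Fh_def by blast
qed



lemma line_path:
  assumes "p \<in> WW"
  shows "(\<lambda>s. s *\<^sub>R p) \<in> paths_H p"
proof -
  have d: "((\<lambda>s. s *\<^sub>R p) has_vector_derivative p) (at s)" for s
  proof -
    have "((\<lambda>s. s *\<^sub>R p) has_vector_derivative 1 *\<^sub>R p) (at s within UNIV)"
      by (auto intro!: derivative_eq_intros)
    then show ?thesis by simp
  qed
  have "(\<lambda>s. s *\<^sub>R p) piecewise_C1_differentiable_on {0..1}"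
    by (intro C1_differentiable_imp_piecewise derivative_intros)
  moreover have "\<forall>s\<in>{0..1}. s *\<^sub>R p \<in> WW" using WW_scale[OF assms] by auto
  moreover have "vector_derivative (\<lambda>s. s *\<^sub>R p) (at s) = p" for s using d by (rule vector_derivative_at)
  moreover have "(0::real) *\<^sub>R p = (0, 0)" by (simp add: zero_prod_def)
  ultimately show ?thesis unfolding paths_H_def using assms by simp
qed

lemma ival_nonneg:
  fixes \<kappa> :: "real \<Rightarrow> real"
  assumes nn: "\<forall>t. 0 \<le> \<kappa> t"
  shows "0 \<le> integral {0..1} (\<lambda>s. gam (vector_derivative g (at s)) * \<kappa> (fst (g s)))"
proof (cases "(\<lambda>s. gam (vector_derivative g (at s)) * \<kappa> (fst (g s))) integrable_on {0..1}")
  case True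
  show ?thesis by (rule integral_nonneg[OF True]) (use nn in \<open>auto simp: gam_def\<close>)
qed (simp add: not_integrable_integral)

lemma ival_bound:
  fixes \<kappa> :: "real \<Rightarrow> real"
  assumes nn: "\<forall>t. 0 \<le> \<kappa> t" and bd: "\<forall>t. \<kappa> t \<le> M"
    and g: "g \<in> paths_H (x0, y0)"
  shows "integral {0..1} (\<lambda>s. gam (vector_derivative g (at s)) * \<kappa> (fst (g s))) \<le> 2 * M * ((x0 + y0) + y0)"
proof -
  obtain T D where T: "finite T" "0 \<in> T" "1 \<in> T"
    and Dd: "\<And>s. s \<in> {0..1} - T \<Longrightarrow> (g has_vector_derivative D s) (at s)"
    and vdg: "\<And>s. s \<in> {0..1} - T \<Longrightarrow> vector_derivative g (at s) = D s"
    and DW: "\<And>s. s \<in> {0..1} - T \<Longrightarrow> D s \<in> WW"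
    and gc: "continuous_on {0..1} g" and gW: "\<And>s. s \<in> {0..1} \<Longrightarrow> g s \<in> WW"
    and g0: "g 0 = (0,0)" and g1: "g 1 = (x0, y0)"
    using path_data[OF g] by metis
  have M0: "0 \<le> M" using nn bd by (meson order_trans)
  have p: "0 \<le> y0" "0 \<le> x0 + y0" using gW[of 1] g1 by (auto simp: WW_iff)
  define A where "A s = fst (D s)" for s
  define B where "B s = snd (D s)" for s
  define V where "V s = snd (g s)" for s
  define U where "U s = fst (g s) + V s" for s
  have AB: "0 \<le> B s" "0 \<le> A s + B s" if "s \<in> {0..1} - T" for s
    using DW[OF that] unfolding A_def B_def by (cases "D s"; auto simp: WW_iff)+
  have Vd: "(V has_real_derivative B s) (at s)" if "s \<in> {0..1} - T" for s
    using hvd_snd[OF Dd[OF that]] unfolding V_def B_def has_real_derivative_iff_has_vector_derivative .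
  have Ud: "(U has_real_derivative A s + B s) (at s)" if "s \<in> {0..1} - T" for s
  proof -
    have "((\<lambda>s. fst (g s)) has_real_derivative A s) (at s)"
      using hvd_fst[OF Dd[OF that]] unfolding A_def has_real_derivative_iff_has_vector_derivative .
    then show ?thesis unfolding U_def[abs_def] using Vd[OF that] by (rule DERIV_add)
  qed
  have Vc: "continuous_on {0..1} V" unfolding V_def using gc by (intro continuous_on_snd)
  have Uc: "continuous_on {0..1} U" unfolding U_def using gc Vc by (intro continuous_on_add continuous_on_fst)
  have fU: "((\<lambda>s. A s + B s) has_integral U 1 - U 0) {0..1}"
    by (rule fundamental_theorem_of_calculus_interior_strong[OF T(1)])
       (use Ud Uc in \<open>auto simp: has_real_derivative_iff_has_vector_derivative\<close>)
  have fV: "(B has_integral V 1 - V 0) {0..1}"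
    by (rule fundamental_theorem_of_calculus_interior_strong[OF T(1)])
       (use Vd Vc in \<open>auto simp: has_real_derivative_iff_has_vector_derivative\<close>)
  have U01: "U 1 - U 0 = x0 + y0" "V 1 - V 0 = y0" using g0 g1 unfolding U_def V_def by auto
  define R where "R s = (2 * M) * (A s + B s) + (2 * M) * B s" for s
  have RI: "(R has_integral (2 * M) * (x0 + y0) + (2 * M) * y0) {0..1}"
    unfolding R_def using has_integral_add[OF has_integral_mult_right[OF fU] has_integral_mult_right[OF fV]]
    unfolding U01 .
  show ?thesis
  proof (cases "(\<lambda>s. gam (vector_derivative g (at s)) * \<kappa> (fst (g s))) integrable_on {0..1}")
    case True
    have "integral {0..1} (\<lambda>s. gam (vector_derivative g (at s)) * \<kappa> (fst (g s))) \<le> integral {0..1} R"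
    proof (rule integral_le_finite[OF True has_integral_integrable[OF RI] T(1)])
      fix s assume s: "s \<in> {0<..<1} - T"
      then have s': "s \<in> {0..1} - T" by auto
      have "vector_derivative g (at s) = (A s, B s)" using vdg[OF s'] unfolding A_def B_def by simp
      moreover have "gam (A s, B s) * \<kappa> (fst (g s)) \<le> (2 * ((A s + B s) + B s)) * M"
        by (rule mult_mono) (use gam_le[OF AB[OF s']] AB[OF s'] nn bd in \<open>auto simp: gam_def\<close>)
      ultimately show "gam (vector_derivative g (at s)) * \<kappa> (fst (g s)) \<le> R s"
        unfolding R_def by (simp add: algebra_simps)
    qed
    also have "\<dots> = 2 * M * ((x0 + y0) + y0)" using integral_unique[OF RI] by (simp add: algebra_simps)
    finally show ?thesis .
  next
    case False
    then show ?thesis using M0 p by (simp add: not_integrable_integral)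
  qed
qed

theorem mainTheorem10:
  fixes c :: "real \<Rightarrow> real" and q x y :: real
  assumes "step_speed c" and "(x, y) \<in> WW"
  shows "\<exists>C::real. \<forall>\<delta>::real. 0 < \<delta> \<and> \<delta> \<le> 1 \<longrightarrow>
           Gamma_q c q (x, y + \<delta>) - Gamma_q c q (x, y) < C * sqrt \<delta>"
proof -
  obtain m where m0: "m > 0" and mle: "\<And>t. m \<le> c t"
    and cloc: "\<And>t. \<exists>e>0. \<forall>s. \<bar>s - t\<bar> < e \<longrightarrow> c t \<le> c s"
    using step_speed_props[OF assms(1)] by blast
  define \<kappa> where "\<kappa> t = inverse (c (t - q))" for t
  define M where "M = inverse m"
  have cpos: "0 < c t" for t using m0 mle[of t] by linarith
  have nn: "\<forall>t. 0 \<le> \<kappa> t" unfolding \<kappa>_def using cpos by (simp add: less_imp_le)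
  have bd: "\<forall>t. \<kappa> t \<le> M" unfolding \<kappa>_def M_def using mle m0 cpos
    by (simp add: le_imp_inverse_le)
  have loc: "\<forall>t. \<exists>e>0. \<forall>s. \<bar>s - t\<bar> < e \<longrightarrow> \<kappa> s \<le> \<kappa> t"
  proof
    fix t
    obtain e where e: "e > 0" "\<forall>s. \<bar>s - (t - q)\<bar> < e \<longrightarrow> c (t - q) \<le> c s" using cloc by blast
    have "\<kappa> s \<le> \<kappa> t" if "\<bar>s - t\<bar> < e" for s
    proof -
      have "c (t - q) \<le> c (s - q)" using e that by (metis diff_diff_eq2 diff_add_cancel add_diff_cancel_right')
      then show ?thesis unfolding \<kappa>_def using cpos by (simp add: le_imp_inverse_le)
    qed
    then show "\<exists>e>0. \<forall>s. \<bar>s - t\<bar> < e \<longrightarrow> \<kappa> s \<le> \<kappa> t" using e(1) by blast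
  qed
  define I where "I g = integral {0..1} (\<lambda>s. gam (vector_derivative g (at s)) * \<kappa> (fst (g s)))" for g :: "real \<Rightarrow> real \<times> real"
  have Geq: "Gamma_q c q p = (SUP g\<in>paths_H p. I g)" for p
    unfolding Gamma_q_def I_def \<kappa>_def by (simp add: divide_inverse)
  have xy: "0 \<le> y" "0 \<le> x + y" using assms(2) by (auto simp: WW_iff)
  have M0: "0 \<le> M" using nn bd by (meson order_trans)
  have bdd: "bdd_above (I ` paths_H (x, y))"
    by (rule bdd_aboveI[where M="2 * M * ((x + y) + y)"]) (use ival_bound[OF nn bd] in \<open>auto simp: I_def\<close>)
  have l0: "(\<lambda>s. s *\<^sub>R (x, y)) \<in> paths_H (x, y)" by (rule line_path[OF assms(2)])
  have G0: "0 \<le> Gamma_q c q (x, y)"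
  proof -
    have "0 \<le> I (\<lambda>s. s *\<^sub>R (x, y))" unfolding I_def by (rule ival_nonneg[OF nn])
    also have "\<dots> \<le> (SUP g\<in>paths_H (x, y). I g)" by (rule cSUP_upper[OF l0 bdd])
    finally show ?thesis using Geq by simp
  qed
  define C0 where "C0 = M * (x + 2 * y + 4)"
  have C00: "0 \<le> C0" unfolding C0_def using M0 xy by simp
  have key: "Gamma_q c q (x, y + \<delta>) \<le> Gamma_q c q (x, y) + C0 * sqrt \<delta>" if d: "0 < \<delta>" "\<delta> \<le> 1" for \<delta>
  proof -
    have WWd: "(x, y + \<delta>) \<in> WW" using xy d by (simp add: WW_iff)
    have ne: "paths_H (x, y + \<delta>) \<noteq> {}" using line_path[OF WWd] by blast
    have "(SUP g\<in>paths_H (x, y + \<delta>). I g) \<le> Gamma_q c q (x, y) + C0 * sqrt \<delta>"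
    proof (rule cSUP_least[OF ne])
      fix g assume g: "g \<in> paths_H (x, y + \<delta>)"
      show "I g \<le> Gamma_q c q (x, y) + C0 * sqrt \<delta>"
      proof (cases "(\<lambda>s. gam (vector_derivative g (at s)) * \<kappa> (fst (g s))) integrable_on {0..1}")
        case True
        obtain h where h: "h \<in> paths_H (x, y)" and le: "I g \<le> I h + C0 * sqrt \<delta>"
          using main_est[OF nn bd loc assms(2) d g True] unfolding I_def C0_def by blast
        have "I h \<le> Gamma_q c q (x, y)" unfolding Geq by (rule cSUP_upper[OF h bdd])
        then show ?thesis using le by linarith
      next
        case False
        then have "I g = 0" unfolding I_def by (simp add: not_integrable_integral)
        moreover have "0 \<le> C0 * sqrt \<delta>" using C00 d by simp
        ultimately show ?thesis using G0 by linarith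
      qed
    qed
    then show ?thesis using Geq by simp
  qed
  show ?thesis
  proof (intro exI[of _ "C0 + 1"] allI impI)
    fix \<delta> :: real assume d: "0 < \<delta> \<and> \<delta> \<le> 1"
    have "0 < sqrt \<delta>" using d by simp
    then have "C0 * sqrt \<delta> < (C0 + 1) * sqrt \<delta>" by (simp add: distrib_right)
    then show "Gamma_q c q (x, y + \<delta>) - Gamma_q c q (x, y) < (C0 + 1) * sqrt \<delta>"
      using key[of \<delta>] d by linarith
  qed
qed

end
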